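(* Let $k\ge3$ and let $(G,c)$ be the planar $2k$-terminal grid network defined as follows: non-terminal vertices $u_{i,j}$ for $1\le i,j\le k$; terminals $v_1,\dots,v_k,h_1,\dots,h_k$, with $v_j$ adjacent only to $u_{1,j}$ and $h_i$ adjacent only to $u_{i,1}$; grid edges $u_{i,j}u_{i+1,j}$ ($1\le i\le k-1$, $1\le j\le k$) and $u_{i,j}u_{i,j+1}$ ($1\le i\le k$, $1\le j\le k-1$). Costs: terminal edges cost $k^4$; edges $u_{i,k}u_{i+1,k}$ and $u_{k,j}u_{k,j+1}$ cost $k^4$; edges $u_{i,j}u_{i+1,j}$ with $i,j\le k-1$ cost $1$; edges $u_{i,j}u_{i,j+1}$ with $i,j\le k-1$ cost $1-j/k^4$. Let $A_G$ be a cutset-edge incidence matrix of $(G,c)$. Then $\mathrm{rank}(A_G)\ge (k-1)^2$.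
   Context: The terminal set is $Q=\{v_1,\dots,v_k,h_1,\dots,h_k\}$ (so there are $2k$ terminals). A cut $(W,V(G)\setminus W)$ is $S$-separating if $W\cap Q\in\{S,Q\setminus S\}$; its cutset is the set of edges with exactly one endpoint in $W$ and its cost is the total cost of the cutset. Cutset-edge incidence matrix: fix an enumeration $S_1,\dots,S_m$, $m=2^{2k-1}-1$, of representatives of the distinct nontrivial bipartitions of $Q$, and for each a minimum-cost $S_t$-separating cut (ties broken arbitrarily); $A_G\in\{0,1\}^{m\times E(G)}$ has entry $(t,e)$ equal to $1$ iff $e$ lies in the cutset of the chosen cut for $S_t$. *)

theory Defs
  imports Main "Jordan_Normal_Form.DL_Rank"
begin

text \<open>Vertices of the grid network: U i j = u_{i,j}, V j = v_j, H i = h_i (1-based indices).\<close>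
datatype vert = U nat nat | V nat | H nat

definition grid_vertices :: "nat \<Rightarrow> vert set" where
  "grid_vertices k = {U i j | i j. 1 \<le> i \<and> i \<le> k \<and> 1 \<le> j \<and> j \<le> k}
     \<union> {V j | j. 1 \<le> j \<and> j \<le> k} \<union> {H i | i. 1 \<le> i \<and> i \<le> k}"

definition terminals :: "nat \<Rightarrow> vert set" where
  "terminals k = {V j | j. 1 \<le> j \<and> j \<le> k} \<union> {H i | i. 1 \<le> i \<and> i \<le> k}"

definition grid_edges :: "nat \<Rightarrow> vert set set" where
  "grid_edges k =
      {{V j, U 1 j} | j. 1 \<le> j \<and> j \<le> k}
    \<union> {{H i, U i 1} | i. 1 \<le> i \<and> i \<le> k}
    \<union> {{U i j, U (Suc i) j} | i j. 1 \<le> i \<and> i \<le> k - 1 \<and> 1 \<le> j \<and> j \<le> k}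
    \<union> {{U i j, U i (Suc j)} | i j. 1 \<le> i \<and> i \<le> k \<and> 1 \<le> j \<and> j \<le> k - 1}"

definition grid_cost :: "nat \<Rightarrow> vert set \<Rightarrow> real" where
  "grid_cost k e =
     (if (\<exists>j. e = {V j, U 1 j}) \<or> (\<exists>i. e = {H i, U i 1})
         \<or> (\<exists>i. e = {U i k, U (Suc i) k}) \<or> (\<exists>j. e = {U k j, U k (Suc j)})
      then real k ^ 4
      else if (\<exists>i j. e = {U i j, U (Suc i) j}) then 1
      else (THE x. \<exists>i j. e = {U i j, U i (Suc j)} \<and> x = 1 - real j / real k ^ 4))"

definition cutset :: "nat \<Rightarrow> vert set \<Rightarrow> vert set set" where
  "cutset k W = {e \<in> grid_edges k. card (e \<inter> W) = 1}"

definition cut_cost :: "nat \<Rightarrow> vert set \<Rightarrow> real" where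
  "cut_cost k W = (\<Sum>e\<in>cutset k W. grid_cost k e)"

definition separating :: "nat \<Rightarrow> vert set \<Rightarrow> vert set \<Rightarrow> bool" where
  "separating k S W \<longleftrightarrow> W \<subseteq> grid_vertices k \<and>
     (W \<inter> terminals k = S \<or> W \<inter> terminals k = terminals k - S)"

definition min_sep_cut :: "nat \<Rightarrow> vert set \<Rightarrow> vert set \<Rightarrow> bool" where
  "min_sep_cut k S W \<longleftrightarrow> separating k S W \<and>
     (\<forall>W'. separating k S W' \<longrightarrow> cut_cost k W \<le> cut_cost k W')"

definition nparts :: "nat \<Rightarrow> nat" where
  "nparts k = 2 ^ (2 * k - 1) - 1"

text \<open>Ss 0, ..., Ss (m-1) are representatives of the distinct nontrivial bipartitions of Q.\<close>
definition bipartition_enum :: "nat \<Rightarrow> (nat \<Rightarrow> vert set) \<Rightarrow> bool" where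
  "bipartition_enum k Ss \<longleftrightarrow>
     (\<forall>t < nparts k. Ss t \<subseteq> terminals k \<and> Ss t \<noteq> {} \<and> Ss t \<noteq> terminals k) \<and>
     (\<forall>t < nparts k. \<forall>t' < nparts k. t \<noteq> t' \<longrightarrow>
         Ss t \<noteq> Ss t' \<and> Ss t \<noteq> terminals k - Ss t') \<and>
     (\<forall>S. S \<subseteq> terminals k \<and> S \<noteq> {} \<and> S \<noteq> terminals k \<longrightarrow>
         (\<exists>t < nparts k. Ss t = S \<or> Ss t = terminals k - S))"

definition incidence_mat :: "nat \<Rightarrow> (nat \<Rightarrow> vert set) \<Rightarrow> vert set list \<Rightarrow> real mat" where
  "incidence_mat k W es =
     mat (nparts k) (length es) (\<lambda>(t, j). if es ! j \<in> cutset k (W t) then 1 else 0)"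

end

theory Submission imports Defs "Jordan_Normal_Form.DL_Rank_Submatrix" begin

definition vE :: "nat \<Rightarrow> nat \<Rightarrow> vert set" where "vE i j = {U i j, U (Suc i) j}"
definition hE :: "nat \<Rightarrow> nat \<Rightarrow> vert set" where "hE i j = {U i j, U i (Suc j)}"

lemma cost_vE: "grid_cost k (vE i j) = (if j = k then real k ^ 4 else 1)"
  unfolding grid_cost_def vE_def by (auto simp: doubleton_eq_iff)

lemma cost_hE: "grid_cost k (hE i j) = (if i = k then real k ^ 4 else 1 - real j / real k ^ 4)"
proof -
  have "(THE x. \<exists>i' j'. {U i j, U i (Suc j)} = {U i' j', U i' (Suc j')} \<and> x = 1 - real j' / real k ^ 4)
        = 1 - real j / real k ^ 4"
    by (rule the_equality) (auto simp: doubleton_eq_iff)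
  then show ?thesis unfolding grid_cost_def hE_def by (auto simp: doubleton_eq_iff)
qed

lemma cost_V: "grid_cost k {V j, U 1 j} = real k ^ 4"
  unfolding grid_cost_def by auto
lemma cost_H: "grid_cost k {H i, U i 1} = real k ^ 4"
  unfolding grid_cost_def by auto


lemma rank_ge_inj:
  fixes A :: "real mat" and P :: "'p set" and \<rho> \<gamma> :: "'p \<Rightarrow> nat"
  assumes A: "A \<in> carrier_mat n nc" and fin: "finite P"
    and \<rho>: "inj_on \<rho> P" "\<rho> ` P \<subseteq> {..<n}" and \<gamma>: "inj_on \<gamma> P" "\<gamma> ` P \<subseteq> {..<nc}"
    and inv: "\<And>x. (\<forall>p\<in>P. (\<Sum>q\<in>P. A $$ (\<rho> p, \<gamma> q) * x q) = 0) \<Longrightarrow> \<forall>q\<in>P. x q = 0"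
  shows "card P \<le> vec_space.rank n A"
proof -
  define I where "I = \<rho> ` P"
  define J where "J = \<gamma> ` P"
  have cI: "card I = card P" unfolding I_def using card_image[OF \<rho>(1)] .
  have cJ: "card J = card P" unfolding J_def using card_image[OF \<gamma>(1)] .
  have rI: "{i. i < dim_row A \<and> i \<in> I} = I" using \<rho>(2) carrier_matD(1)[OF A] unfolding I_def by blast
  have rJ: "{i. i < dim_col A \<and> i \<in> J} = J" using \<gamma>(2) carrier_matD(2)[OF A] unfolding J_def by blast
  define r where "r = card P"
  define M where "M = submatrix A I J"
  have Mc: "M \<in> carrier_mat r r" unfolding M_def r_def
    by (rule carrier_matI; unfold dim_submatrix rI rJ cI cJ; rule refl)
  have Mi: "\<And>i j. i < r \<Longrightarrow> j < r \<Longrightarrow> M $$ (i,j) = A $$ (pick I i, pick J j)"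
    unfolding M_def r_def by (rule submatrix_index; unfold rI rJ cI cJ)
  define h where "h q = card {a\<in>J. a < \<gamma> q}" for q
  have hp: "q \<in> P \<Longrightarrow> pick J (h q) = \<gamma> q" for q unfolding h_def J_def
    by (rule pick_card_in_set) auto
  have finJ: "finite J" unfolding J_def using fin by simp
  have finI: "finite I" unfolding I_def using fin by simp
  have hlt: "q \<in> P \<Longrightarrow> h q < r" for q
  proof -
    assume q: "q \<in> P"
    have "{a\<in>J. a < \<gamma> q} \<subset> J" using q unfolding J_def by auto
    then show ?thesis unfolding h_def r_def using psubset_card_mono[OF finJ] cJ by simp
  qed
  have hinj: "inj_on h P"
    by (rule inj_onI) (metis hp \<gamma>(1) inj_onD)
  have himg: "h ` P = {..<r}"
  proof (rule card_subset_eq)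
    show "h ` P \<subseteq> {..<r}" using hlt by auto
    show "card (h ` P) = card {..<r}" using card_image[OF hinj] r_def by simp
  qed simp
  have "det M \<noteq> 0"
  proof
    assume "det M = 0"
    then obtain v where v: "v \<in> carrier_vec r" "v \<noteq> 0\<^sub>v r" "M *\<^sub>v v = 0\<^sub>v r"
      using det_0_iff_vec_prod_zero_field[OF Mc] by blast
    define x where "x q = v $ h q" for q
    have "\<forall>p\<in>P. (\<Sum>q\<in>P. A $$ (\<rho> p, \<gamma> q) * x q) = 0"
    proof
      fix p assume p: "p \<in> P"
      define i where "i = card {a\<in>I. a < \<rho> p}"
      have pi: "pick I i = \<rho> p" unfolding i_def I_def by (rule pick_card_in_set) (use p in auto)
      have "{a\<in>I. a < \<rho> p} \<subset> I" using p unfolding I_def by auto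
      then have il: "i < r" unfolding i_def r_def using psubset_card_mono[OF finI] cI by simp
      have "0 = (M *\<^sub>v v) $ i" using v(3) il by simp
      also have "\<dots> = (\<Sum>c<r. M $$ (i,c) * v $ c)"
        using Mc v(1) il by (simp add: mult_mat_vec_def scalar_prod_def atLeast0LessThan)
      also have "\<dots> = (\<Sum>c<r. A $$ (\<rho> p, pick J c) * v $ c)"
        using Mi il pi by simp
      also have "\<dots> = (\<Sum>q\<in>P. A $$ (\<rho> p, pick J (h q)) * v $ h q)"
        unfolding himg[symmetric] by (rule sum.reindex[OF hinj, unfolded comp_def])
      also have "\<dots> = (\<Sum>q\<in>P. A $$ (\<rho> p, \<gamma> q) * x q)"
        using hp unfolding x_def by simp
      finally show "(\<Sum>q\<in>P. A $$ (\<rho> p, \<gamma> q) * x q) = 0" by simp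
    qed
    then have x0: "\<forall>q\<in>P. x q = 0" by (rule inv)
    have "v = 0\<^sub>v r"
    proof (rule eq_vecI)
      fix c assume "c < dim_vec (0\<^sub>v r)"
      then have "c \<in> h ` P" using himg by simp
      then show "v $ c = 0\<^sub>v r $ c" using x0 x_def \<open>c < dim_vec (0\<^sub>v r)\<close> by auto
    qed (use v(1) in simp)
    then show False using v(2) by simp
  qed
  then have "card {j. j < nc \<and> j \<in> J} \<le> vec_space.rank n A"
    using vec_space.rank_gt_minor[OF A] unfolding M_def by blast
  moreover have "{j. j < nc \<and> j \<in> J} = J" using \<gamma>(2) unfolding J_def by blast
  ultimately show ?thesis using cJ by simp
qed


lemma card_pair_int: "x \<noteq> y \<Longrightarrow> (card ({x,y} \<inter> X) = 1) \<longleftrightarrow> ((x \<in> X) \<noteq> (y \<in> X))"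
  by (cases "x \<in> X"; cases "y \<in> X") auto

lemma vE_in: "vE i j \<in> grid_edges k \<longleftrightarrow> (1 \<le> i \<and> i \<le> k - 1 \<and> 1 \<le> j \<and> j \<le> k)"
  unfolding grid_edges_def vE_def by (auto simp: doubleton_eq_iff)

lemma hE_in: "hE i j \<in> grid_edges k \<longleftrightarrow> (1 \<le> i \<and> i \<le> k \<and> 1 \<le> j \<and> j \<le> k - 1)"
  unfolding grid_edges_def hE_def by (auto simp: doubleton_eq_iff)

lemma V_in: "{V j, U 1 j} \<in> grid_edges k \<longleftrightarrow> (1 \<le> j \<and> j \<le> k)"
  unfolding grid_edges_def by (auto simp: doubleton_eq_iff)

lemma H_in: "{H i, U i 1} \<in> grid_edges k \<longleftrightarrow> (1 \<le> i \<and> i \<le> k)"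
  unfolding grid_edges_def by (auto simp: doubleton_eq_iff)

lemma grid_edges_cases:
  assumes "e \<in> grid_edges k"
  obtains j where "e = {V j, U 1 j}" "1 \<le> j" "j \<le> k"
  | i where "e = {H i, U i 1}" "1 \<le> i" "i \<le> k"
  | i j where "e = vE i j" "1 \<le> i" "i \<le> k - 1" "1 \<le> j" "j \<le> k"
  | i j where "e = hE i j" "1 \<le> i" "i \<le> k" "1 \<le> j" "j \<le> k - 1"
  using assms unfolding grid_edges_def vE_def hE_def by blast

lemma cut_vE: "vE i j \<in> cutset k X \<longleftrightarrow> (1 \<le> i \<and> i \<le> k - 1 \<and> 1 \<le> j \<and> j \<le> k \<and> ((U i j \<in> X) \<noteq> (U (Suc i) j \<in> X)))"
  unfolding cutset_def using vE_in[of i j k] card_pair_int[of "U i j" "U (Suc i) j" X]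
  by (auto simp: vE_def)

lemma cut_hE: "hE i j \<in> cutset k X \<longleftrightarrow> (1 \<le> i \<and> i \<le> k \<and> 1 \<le> j \<and> j \<le> k - 1 \<and> ((U i j \<in> X) \<noteq> (U i (Suc j) \<in> X)))"
  unfolding cutset_def using hE_in[of i j k] card_pair_int[of "U i j" "U i (Suc j)" X]
  by (auto simp: hE_def)

lemma cut_V: "{V j, U 1 j} \<in> cutset k X \<longleftrightarrow> (1 \<le> j \<and> j \<le> k \<and> ((V j \<in> X) \<noteq> (U 1 j \<in> X)))"
  unfolding cutset_def using V_in[of j k] card_pair_int[of "V j" "U 1 j" X] by auto

lemma cut_H: "{H i, U i 1} \<in> cutset k X \<longleftrightarrow> (1 \<le> i \<and> i \<le> k \<and> ((H i \<in> X) \<noteq> (U i 1 \<in> X)))"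
  unfolding cutset_def using H_in[of i k] card_pair_int[of "H i" "U i 1" X] by auto

lemma vE_inj: "vE i j = vE i' j' \<longleftrightarrow> i = i' \<and> j = j'"
  unfolding vE_def by (auto simp: doubleton_eq_iff)
lemma hE_inj: "hE i j = hE i' j' \<longleftrightarrow> i = i' \<and> j = j'"
  unfolding hE_def by (auto simp: doubleton_eq_iff)
lemma hE_vE: "hE i j \<noteq> vE i' j'"
  unfolding vE_def hE_def by (auto simp: doubleton_eq_iff)

lemma chain_const: "(\<And>j. m \<le> j \<Longrightarrow> j < n \<Longrightarrow> f j = f (Suc j)) \<Longrightarrow> m \<le> n \<Longrightarrow> f m = f n"
proof (induction n)
  case 0 then show ?case by simp
next
  case (Suc n)
  show ?case
  proof (cases "m = Suc n")
    case False
    then have "m \<le> n" using Suc.prems by simp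
    then show ?thesis using Suc by simp
  qed simp
qed

lemma chain_cross: "f m \<Longrightarrow> \<not> f n \<Longrightarrow> m \<le> n \<Longrightarrow> \<exists>j. m \<le> j \<and> j < n \<and> f j \<and> \<not> f (Suc j)"
proof (rule ccontr)
  assume a: "f m" "\<not> f n" "m \<le> n" "\<not> (\<exists>j. m \<le> j \<and> j < n \<and> f j \<and> \<not> f (Suc j))"
  have "\<forall>j. m \<le> j \<and> j \<le> n \<longrightarrow> f j"
  proof (intro allI impI)
    fix j assume "m \<le> j \<and> j \<le> n"
    then show "f j"
    proof (induction j)
      case 0 then show ?case using a by simp
    next
      case (Suc j)
      show ?case
      proof (cases "m = Suc j")
        case False then show ?thesis using Suc a(4) by auto
      qed (use a in simp)
    qed
  qed
  then show False using a by auto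
qed

lemma GV_U: "U i j \<in> grid_vertices k \<longleftrightarrow> (1 \<le> i \<and> i \<le> k \<and> 1 \<le> j \<and> j \<le> k)"
  unfolding grid_vertices_def by blast
lemma GV_V: "V j \<in> grid_vertices k \<longleftrightarrow> (1 \<le> j \<and> j \<le> k)"
  unfolding grid_vertices_def by blast
lemma GV_H: "H j \<in> grid_vertices k \<longleftrightarrow> (1 \<le> j \<and> j \<le> k)"
  unfolding grid_vertices_def by blast
lemma Q_U: "U i j \<notin> terminals k"
  unfolding terminals_def by blast
lemma Q_V: "V j \<in> terminals k \<longleftrightarrow> (1 \<le> j \<and> j \<le> k)"
  unfolding terminals_def by blast
lemma Q_H: "H j \<in> terminals k \<longleftrightarrow> (1 \<le> j \<and> j \<le> k)"
  unfolding terminals_def by blast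

lemma edge_pair: "e \<in> grid_edges k \<Longrightarrow> \<exists>x y. e = {x,y} \<and> x \<noteq> y \<and> x \<in> grid_vertices k \<and> y \<in> grid_vertices k"
proof (erule grid_edges_cases)
  fix j assume "e = {V j, U 1 j}" "1 \<le> j" "j \<le> k"
  then show ?thesis by (intro exI[of _ "V j"] exI[of _ "U 1 j"]) (simp add: GV_U GV_V)
next
  fix j assume "e = {H j, U j 1}" "1 \<le> j" "j \<le> k"
  then show ?thesis by (intro exI[of _ "H j"] exI[of _ "U j 1"]) (simp add: GV_U GV_H)
next
  fix i j assume "e = vE i j" "1 \<le> i" "i \<le> k - 1" "1 \<le> j" "j \<le> k"
  then show ?thesis by (intro exI[of _ "U i j"] exI[of _ "U (Suc i) j"]) (auto simp: GV_U vE_def)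
next
  fix i j assume "e = hE i j" "1 \<le> i" "i \<le> k" "1 \<le> j" "j \<le> k - 1"
  then show ?thesis by (intro exI[of _ "U i j"] exI[of _ "U i (Suc j)"]) (auto simp: GV_U hE_def)
qed

lemma cost_lb: assumes "3 \<le> k" "e \<in> grid_edges k"
  shows "1 - (real k - 1) / real k ^ 4 \<le> grid_cost k e"
proof -
  have K: "real k ^ 4 \<ge> 1" using assms(1) by simp
  have p: "0 \<le> (real k - 1) / real k ^ 4" using assms(1) by simp
  have p1: "1 - (real k - 1) / real k ^ 4 \<le> 1" using p by simp
  show ?thesis using assms(2)
  proof (cases rule: grid_edges_cases)
    case (3 i j)
    then have c: "grid_cost k e = (if j = k then real k ^ 4 else 1)" by (simp add: cost_vE)
    show ?thesis
    proof (cases "j = k")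
      case True then have "grid_cost k e = real k ^ 4" using c by simp
      then show ?thesis using K p1 by linarith
    next
      case False then have "grid_cost k e = 1" using c by simp
      then show ?thesis using p1 by linarith
    qed
  next
    case (4 i j)
    have jb: "real j / real k ^ 4 \<le> (real k - 1) / real k ^ 4"
      using 4 assms(1) by (intro divide_right_mono) auto
    have c: "grid_cost k e = (if i = k then real k ^ 4 else 1 - real j / real k ^ 4)"
      using 4 by (simp add: cost_hE)
    show ?thesis
    proof (cases "i = k")
      case True then have "grid_cost k e = real k ^ 4" using c by simp
      then show ?thesis using K p1 by linarith
    next
      case False then have "grid_cost k e = 1 - real j / real k ^ 4" using c by simp
      then show ?thesis using jb by linarith
    qed
  next
    case (1 j) then have "grid_cost k e = real k ^ 4" using cost_V by metis
    then show ?thesis using K p1 by linarith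
  next
    case (2 i) then have "grid_cost k e = real k ^ 4" using cost_H by metis
    then show ?thesis using K p1 by linarith
  qed
qed

lemma c0_pos: "3 \<le> k \<Longrightarrow> 0 < 1 - (real k - 1) / real k ^ 4"
proof -
  assume k: "3 \<le> k"
  have "real k - 1 < real k ^ 4"
  proof -
    have "k \<le> k ^ 4" using k by (intro self_le_power) auto
    then have "real k \<le> real (k ^ 4)" by (simp only: of_nat_le_iff)
    moreover have "real (k ^ 4) = real k ^ 4" by simp
    ultimately show ?thesis by linarith
  qed
  then show ?thesis using k by (simp add: field_simps)
qed

definition Sab :: "nat \<Rightarrow> nat \<Rightarrow> vert set" where
  "Sab a b = {H i | i. 1 \<le> i \<and> i \<le> a} \<union> {V j | j. 1 \<le> j \<and> j \<le> b}"

lemma sum_D: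
  fixes hc vc :: "nat \<Rightarrow> nat"
  assumes k: "3 \<le> k" and a: "a \<le> k - 1" and b: "b \<le> k - 1"
  shows "(\<Sum>e\<in>(\<lambda>i. hE i (hc i)) ` {1..a} \<union> (\<lambda>j. vE (vc j) j) ` {1..b}. grid_cost k e)
     = real b + (\<Sum>i=1..a. 1 - real (hc i) / real k ^ 4)"
proof -
  have inj1: "inj_on (\<lambda>i. hE i (hc i)) {1..a}" by (rule inj_onI) (simp add: hE_inj)
  have inj2: "inj_on (\<lambda>j. vE (vc j) j) {1..b}" by (rule inj_onI) (simp add: vE_inj)
  have disj: "(\<lambda>i. hE i (hc i)) ` {1..a} \<inter> (\<lambda>j. vE (vc j) j) ` {1..b} = {}" using hE_vE by blast
  have s0: "(\<Sum>e\<in>(\<lambda>i. hE i (hc i)) ` {1..a} \<union> (\<lambda>j. vE (vc j) j) ` {1..b}. grid_cost k e)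
     = (\<Sum>e\<in>(\<lambda>i. hE i (hc i)) ` {1..a}. grid_cost k e) + (\<Sum>e\<in>(\<lambda>j. vE (vc j) j) ` {1..b}. grid_cost k e)"
    by (rule sum.union_disjoint) (use disj in auto)
  have s1: "(\<Sum>e\<in>(\<lambda>i. hE i (hc i)) ` {1..a}. grid_cost k e) = (\<Sum>i=1..a. grid_cost k (hE i (hc i)))"
    using sum.reindex[OF inj1] by simp
  have s2: "(\<Sum>i=1..a. grid_cost k (hE i (hc i))) = (\<Sum>i=1..a. 1 - real (hc i) / real k ^ 4)"
    by (rule sum.cong) (use a k in \<open>auto simp: cost_hE\<close>)
  have s3: "(\<Sum>e\<in>(\<lambda>j. vE (vc j) j) ` {1..b}. grid_cost k e) = (\<Sum>j=1..b. grid_cost k (vE (vc j) j))"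
    using sum.reindex[OF inj2] by simp
  have s4: "(\<Sum>j=1..b. grid_cost k (vE (vc j) j)) = (\<Sum>j=1..b. (1::real))"
    by (rule sum.cong) (use b k in \<open>auto simp: cost_vE\<close>)
  show ?thesis using s0 s1 s2 s3 s4 by simp
qed

lemma sep_compl: assumes "S \<subseteq> terminals k"
  shows "separating k (terminals k - S) W \<longleftrightarrow> separating k S W"
proof -
  have "terminals k - (terminals k - S) = S" using assms by blast
  then show ?thesis unfolding separating_def by auto
qed

lemma min_sep_compl: assumes "S \<subseteq> terminals k"
  shows "min_sep_cut k (terminals k - S) W \<longleftrightarrow> min_sep_cut k S W"
  unfolding min_sep_cut_def using sep_compl[OF assms] by simp

lemma vE_hE: "vE i j \<noteq> hE i' j'"
  using hE_vE by metis

lemma num1: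
  fixes a b k :: nat and K :: real
  assumes k3: "3 \<le> k" and a2: "a \<le> k - 1" and KK: "K = real k ^ 4"
  shows "real a * (1 - real b / K) < 1 - (real k - 1) / K + real a * (1 - (real k - 1) / K)"
proof -
  have Kp: "K > 0" using KK k3 by simp
  define c where "c = real k - 1"
  have ac: "real a \<le> c" using a2 k3 unfolding c_def by linarith
  have c0: "0 \<le> c" using k3 unfolding c_def by simp
  have m1: "real a * c \<le> c * c" using ac c0 by (intro mult_right_mono) auto
  have kk: "c + c * c < K"
  proof -
    have "k * k < k ^ 4"
    proof -
      have "k * k = k ^ 2" by (simp add: power2_eq_square)
      also have "\<dots> < k ^ 4" using k3 by (intro power_strict_increasing) auto
      finally show ?thesis .
    qed
    then have "real (k * k) < real (k ^ 4)" by (simp only: of_nat_less_iff)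
    then have "real k * real k < K" unfolding KK by simp
    moreover have "c + c * c = real k * real k - real k" unfolding c_def by (simp add: algebra_simps)
    ultimately show ?thesis using k3 by linarith
  qed
  have ab0: "0 \<le> real a * real b" by simp
  have L: "real a * (1 - real b / K) = (real a * K - real a * real b) / K"
    using Kp by (simp add: field_simps)
  have R: "1 - c / K + real a * (1 - c / K) = (K - c + real a * K - real a * c) / K"
    using Kp by (simp add: field_simps)
  have "real a * K - real a * real b < K - c + real a * K - real a * c"
    using m1 kk ab0 by linarith
  then have "(real a * K - real a * real b) / K < (K - c + real a * K - real a * c) / K"
    using Kp by (intro divide_strict_right_mono) auto
  then show ?thesis using L R unfolding c_def by simp
qed

lemma key:
  fixes k a b :: nat and W :: "vert set"
  assumes k3: "3 \<le> k" and a1: "1 \<le> a" and a2: "a \<le> k - 1" and b1: "1 \<le> b" and b2: "b \<le> k - 1"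
    and fin: "finite (grid_edges k)"
    and mc: "min_sep_cut k (Sab a b) W"
    and i1: "1 \<le> i" and i2: "i \<le> k - 1" and j1: "1 \<le> j" and j2: "j \<le> k - 1"
  shows "vE i j \<in> cutset k W \<longleftrightarrow> (i = a \<and> j \<le> b)"
proof -
  define S where "S = Sab a b"
  define K :: real where "K = real k ^ 4"
  have Kpos: "K > 0" unfolding K_def using k3 by simp
  have SQ: "S \<subseteq> terminals k" unfolding S_def Sab_def terminals_def using a2 b2 by auto
  define W0 where "W0 = S \<union> {U i j | i j. 1 \<le> i \<and> i \<le> a \<and> 1 \<le> j \<and> j \<le> b}"
  have W0U: "U i j \<in> W0 \<longleftrightarrow> (1 \<le> i \<and> i \<le> a \<and> 1 \<le> j \<and> j \<le> b)" for i j
    unfolding W0_def S_def Sab_def by blast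
  have W0V: "V j \<in> W0 \<longleftrightarrow> (1 \<le> j \<and> j \<le> b)" for j
    unfolding W0_def S_def Sab_def by blast
  have W0H: "H j \<in> W0 \<longleftrightarrow> (1 \<le> j \<and> j \<le> a)" for j
    unfolding W0_def S_def Sab_def by blast
  have sepW0: "separating k S W0"
    unfolding separating_def
  proof
    show "W0 \<subseteq> grid_vertices k"
    proof
      fix x assume "x \<in> W0"
      then show "x \<in> grid_vertices k" using a2 b2
        by (cases x) (auto simp: W0U W0V W0H GV_U GV_V GV_H)
    qed
    have "W0 \<inter> terminals k = S"
    proof
      show "W0 \<inter> terminals k \<subseteq> S" using Q_U unfolding W0_def by blast
      show "S \<subseteq> W0 \<inter> terminals k" using SQ unfolding W0_def by blast
    qed
    then show "W0 \<inter> terminals k = S \<or> W0 \<inter> terminals k = terminals k - S" by simp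
  qed
  have cutW0: "cutset k W0 \<subseteq> (\<lambda>i. hE i ((\<lambda>_. b) i)) ` {1..a} \<union> (\<lambda>j. vE ((\<lambda>_. a) j) j) ` {1..b}"
  proof
    fix e assume e: "e \<in> cutset k W0"
    then have "e \<in> grid_edges k" unfolding cutset_def by simp
    then show "e \<in> (\<lambda>i. hE i ((\<lambda>_. b) i)) ` {1..a} \<union> (\<lambda>j. vE ((\<lambda>_. a) j) j) ` {1..b}"
    proof (cases rule: grid_edges_cases)
      case (1 j) then have False using e[unfolded 1(1) cut_V] W0U W0V a1 b1 by auto
      then show ?thesis ..
    next
      case (2 i) then have False using e[unfolded 2(1) cut_H] W0U W0H a1 b1 by auto
      then show ?thesis ..
    next
      case (3 i j)
      then have "i = a \<and> j \<le> b" using e by (auto simp: cut_vE W0U)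
      then show ?thesis using 3 by auto
    next
      case (4 i j)
      then have "j = b \<and> i \<le> a" using e by (auto simp: cut_hE W0U)
      then show ?thesis using 4 by auto
    qed
  qed
  have costW0: "cut_cost k W0 \<le> real b + real a * (1 - real b / K)"
  proof -
    have "cut_cost k W0 \<le> (\<Sum>e\<in>(\<lambda>i. hE i ((\<lambda>_. b) i)) ` {1..a} \<union> (\<lambda>j. vE ((\<lambda>_. a) j) j) ` {1..b}. grid_cost k e)"
      unfolding cut_cost_def
    proof (rule sum_mono2)
      show "finite ((\<lambda>i. hE i ((\<lambda>_. b) i)) ` {1..a} \<union> (\<lambda>j. vE ((\<lambda>_. a) j) j) ` {1..b})" by simp
      show "cutset k W0 \<subseteq> (\<lambda>i. hE i ((\<lambda>_. b) i)) ` {1..a} \<union> (\<lambda>j. vE ((\<lambda>_. a) j) j) ` {1..b}" by (rule cutW0)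
      fix e assume "e \<in> (\<lambda>i. hE i ((\<lambda>_. b) i)) ` {1..a} \<union> (\<lambda>j. vE ((\<lambda>_. a) j) j) ` {1..b} - cutset k W0"
      then have "e \<in> grid_edges k" using a1 a2 b1 b2 by (auto simp: hE_in vE_in)
      then show "0 \<le> grid_cost k e" using cost_lb[OF k3] c0_pos[OF k3] by (meson less_le_trans less_imp_le)
    qed
    also have "\<dots> = real b + (\<Sum>i=1..a. 1 - real b / real k ^ 4)"
      by (rule sum_D[OF k3 a2 b2])
    also have "\<dots> = real b + real a * (1 - real b / K)" unfolding K_def by simp
    finally show ?thesis .
  qed
  have sepW: "separating k S W" and minW: "cut_cost k W \<le> cut_cost k W0"
    using mc sepW0 unfolding min_sep_cut_def S_def by auto
  define X where "X = (if W \<inter> terminals k = S then W else grid_vertices k - W)"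
  have QG: "terminals k \<subseteq> grid_vertices k" unfolding terminals_def grid_vertices_def by blast
  have XQ: "X \<inter> terminals k = S"
  proof (cases "W \<inter> terminals k = S")
    case False
    then have "W \<inter> terminals k = terminals k - S" using sepW unfolding separating_def by auto
    then have wq: "\<And>x. x \<in> W \<and> x \<in> terminals k \<longleftrightarrow> x \<in> terminals k \<and> x \<notin> S" by blast
    have "(grid_vertices k - W) \<inter> terminals k = S"
    proof -
      have "x \<in> (grid_vertices k - W) \<inter> terminals k \<longleftrightarrow> x \<in> S" for x
        using wq[of x] QG SQ by blast
      then show ?thesis by blast
    qed
    then show ?thesis unfolding X_def using False by simp
  qed (simp add: X_def)
  have cutX: "cutset k X = cutset k W"
  proof (cases "W \<inter> terminals k = S")
    case False
    have "e \<in> cutset k (grid_vertices k - W) \<longleftrightarrow> e \<in> cutset k W" for e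
    proof (cases "e \<in> grid_edges k")
      case True
      then obtain x y where xy: "e = {x,y}" "x \<noteq> y" "x \<in> grid_vertices k" "y \<in> grid_vertices k"
        using edge_pair by blast
      show ?thesis unfolding cutset_def using True xy card_pair_int[of x y] by auto
    qed (simp add: cutset_def)
    then show ?thesis unfolding X_def using False by auto
  qed (simp add: X_def)
  define C where "C = cutset k X"
  have finC: "finite C" unfolding C_def cutset_def using fin by simp
  have CE: "C \<subseteq> grid_edges k" unfolding C_def cutset_def by auto
  have cnn: "e \<in> grid_edges k \<Longrightarrow> 0 \<le> grid_cost k e" for e
    using cost_lb[OF k3] c0_pos[OF k3] by (meson less_le_trans less_imp_le)
  have costC: "(\<Sum>e\<in>C. grid_cost k e) \<le> real b + real a * (1 - real b / K)"
    using minW costW0 cutX unfolding C_def cut_cost_def by simp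
  have XV: "1 \<le> j \<Longrightarrow> j \<le> k \<Longrightarrow> V j \<in> X \<longleftrightarrow> j \<le> b" for j
  proof -
    assume j: "1 \<le> j" "j \<le> k"
    have "V j \<in> X \<longleftrightarrow> V j \<in> X \<inter> terminals k" using j Q_V by blast
    also have "\<dots> \<longleftrightarrow> j \<le> b" unfolding XQ S_def Sab_def using j by blast
    finally show ?thesis .
  qed
  have XH: "1 \<le> i \<Longrightarrow> i \<le> k \<Longrightarrow> H i \<in> X \<longleftrightarrow> i \<le> a" for i
  proof -
    assume i: "1 \<le> i" "i \<le> k"
    have "H i \<in> X \<longleftrightarrow> H i \<in> X \<inter> terminals k" using i Q_H by blast
    also have "\<dots> \<longleftrightarrow> i \<le> a" unfolding XQ S_def Sab_def using i by blast
    finally show ?thesis .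
  qed
  have abK: "real a + real b < K"
  proof -
    have n1: "a + b < 2 * k" using a2 b2 k3 by arith
    have n2: "2 * k \<le> k ^ 2" using k3 by (simp add: power2_eq_square)
    have n3: "k ^ 2 \<le> k ^ 4" using k3 by (intro power_increasing) auto
    have "a + b < k ^ 4" using n1 n2 n3 by linarith
    then have "real (a + b) < real (k ^ 4)" by (simp only: of_nat_less_iff)
    then show ?thesis unfolding K_def by simp
  qed
  have cleC: "e \<in> C \<Longrightarrow> grid_cost k e \<le> (\<Sum>e\<in>C. grid_cost k e)" for e
    by (rule member_le_sum) (use finC CE cnn in auto)
  have abK2: "real b + real a * (1 - real b / K) \<le> real a + real b"
  proof -
    have "0 \<le> real b / K" using Kpos by simp
    then have "real a * (1 - real b / K) \<le> real a * 1" by (intro mult_left_mono) auto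
    then show ?thesis by simp
  qed
  have heavy: "e \<in> grid_edges k \<Longrightarrow> grid_cost k e = K \<Longrightarrow> e \<notin> C" for e
  proof
    assume "e \<in> grid_edges k" "grid_cost k e = K" "e \<in> C"
    then have "K \<le> real b + real a * (1 - real b / K)" using cleC costC by fastforce
    then show False using abK abK2 by linarith
  qed
  have same: "e = {x,y} \<Longrightarrow> x \<noteq> y \<Longrightarrow> e \<in> grid_edges k \<Longrightarrow> e \<notin> C \<Longrightarrow> (x \<in> X \<longleftrightarrow> y \<in> X)" for e x y
    using card_pair_int[of x y X] unfolding C_def cutset_def by auto
  have T1: "1 \<le> j \<Longrightarrow> j \<le> k \<Longrightarrow> U 1 j \<in> X \<longleftrightarrow> j \<le> b" for j
  proof -
    assume j: "1 \<le> j" "j \<le> k"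
    have e: "{V j, U 1 j} \<in> grid_edges k" using j V_in by simp
    have "{V j, U 1 j} \<notin> C" by (rule heavy[OF e]) (unfold K_def, rule cost_V)
    then have "V j \<in> X \<longleftrightarrow> U 1 j \<in> X" using same[OF refl _ e] by simp
    then show ?thesis using XV[OF j] by simp
  qed
  have T2: "1 \<le> i \<Longrightarrow> i \<le> k \<Longrightarrow> U i 1 \<in> X \<longleftrightarrow> i \<le> a" for i
  proof -
    assume i: "1 \<le> i" "i \<le> k"
    have e: "{H i, U i 1} \<in> grid_edges k" using i H_in by simp
    have "{H i, U i 1} \<notin> C" by (rule heavy[OF e]) (unfold K_def, rule cost_H)
    then have "H i \<in> X \<longleftrightarrow> U i 1 \<in> X" using same[OF refl _ e] by simp
    then show ?thesis using XH[OF i] by simp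
  qed
  have CV: "vE i j \<in> C \<longleftrightarrow> (1 \<le> i \<and> i \<le> k - 1 \<and> 1 \<le> j \<and> j \<le> k \<and> ((U i j \<in> X) \<noteq> (U (Suc i) j \<in> X)))" for i j
    unfolding C_def by (rule cut_vE)
  have CH: "hE i j \<in> C \<longleftrightarrow> (1 \<le> i \<and> i \<le> k \<and> 1 \<le> j \<and> j \<le> k - 1 \<and> ((U i j \<in> X) \<noteq> (U i (Suc j) \<in> X)))" for i j
    unfolding C_def by (rule cut_hE)
  have T3: "1 \<le> i \<Longrightarrow> i \<le> k \<Longrightarrow> U i k \<notin> X" for i
  proof -
    assume i: "1 \<le> i" "i \<le> k"
    have "U 1 k \<in> X \<longleftrightarrow> U i k \<in> X"
    proof (rule chain_const[where f = "\<lambda>i. U i k \<in> X"])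
      fix i' assume i': "1 \<le> i'" "i' < i"
      have "vE i' k \<notin> C" using i' i k3 by (intro heavy) (auto simp: vE_in cost_vE K_def)
      then show "U i' k \<in> X \<longleftrightarrow> U (Suc i') k \<in> X" using CV i' i k3 by auto
    qed (use i in simp)
    then show ?thesis using T1[of k] b2 k3 by simp
  qed
  have T4: "1 \<le> j \<Longrightarrow> j \<le> k \<Longrightarrow> U k j \<notin> X" for j
  proof -
    assume j: "1 \<le> j" "j \<le> k"
    have "U k j \<in> X \<longleftrightarrow> U k k \<in> X"
    proof (rule chain_const[where f = "\<lambda>j. U k j \<in> X"])
      fix j' assume j': "j \<le> j'" "j' < k"
      have "hE k j' \<notin> C" using j' j k3 by (intro heavy) (auto simp: hE_in cost_hE K_def)
      then show "U k j' \<in> X \<longleftrightarrow> U k (Suc j') \<in> X" using CH j' j k3 by auto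
    qed (use j in simp)
    then show ?thesis using T3[of k] k3 by simp
  qed
  have hex: "\<forall>i\<in>{1..a}. \<exists>j. 1 \<le> j \<and> j < k \<and> U i j \<in> X \<and> U i (Suc j) \<notin> X"
  proof
    fix i assume i: "i \<in> {1..a}"
    have "U i 1 \<in> X" using T2 i a2 by auto
    moreover have "U i k \<notin> X" using T3 i a2 by auto
    ultimately show "\<exists>j. 1 \<le> j \<and> j < k \<and> U i j \<in> X \<and> U i (Suc j) \<notin> X"
      using chain_cross[of "\<lambda>j. U i j \<in> X" 1 k] k3 by auto
  qed
  obtain hc where hc: "\<forall>i\<in>{1..a}. 1 \<le> hc i \<and> hc i < k \<and> U i (hc i) \<in> X \<and> U i (Suc (hc i)) \<notin> X"
    using bchoice[OF hex] by blast
  have vex: "\<forall>j\<in>{1..b}. \<exists>i. 1 \<le> i \<and> i < k \<and> U i j \<in> X \<and> U (Suc i) j \<notin> X"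
  proof
    fix j assume j: "j \<in> {1..b}"
    have "U 1 j \<in> X" using T1 j b2 by auto
    moreover have "U k j \<notin> X" using T4 j b2 by auto
    ultimately show "\<exists>i. 1 \<le> i \<and> i < k \<and> U i j \<in> X \<and> U (Suc i) j \<notin> X"
      using chain_cross[of "\<lambda>i. U i j \<in> X" 1 k] k3 by auto
  qed
  obtain vc where vc: "\<forall>j\<in>{1..b}. 1 \<le> vc j \<and> vc j < k \<and> U (vc j) j \<in> X \<and> U (Suc (vc j)) j \<notin> X"
    using bchoice[OF vex] by blast
  define D where "D = (\<lambda>i. hE i (hc i)) ` {1..a} \<union> (\<lambda>j. vE (vc j) j) ` {1..b}"
  have DC: "D \<subseteq> C"
  proof
    fix e assume "e \<in> D"
    then consider i where "i \<in> {1..a}" "e = hE i (hc i)" | j where "j \<in> {1..b}" "e = vE (vc j) j"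
      unfolding D_def by blast
    then show "e \<in> C"
    proof cases
      case 1
      then have h: "1 \<le> hc i" "hc i < k" "U i (hc i) \<in> X" "U i (Suc (hc i)) \<notin> X" using hc by auto
      show ?thesis unfolding 1(2) CH using h 1(1) a2 by auto
    next
      case 2
      then have h: "1 \<le> vc j" "vc j < k" "U (vc j) j \<in> X" "U (Suc (vc j)) j \<notin> X" using vc by auto
      show ?thesis unfolding 2(2) CV using h 2(1) b2 by auto
    qed
  qed
  have sumD: "(\<Sum>e\<in>D. grid_cost k e) = real b + (\<Sum>i=1..a. 1 - real (hc i) / K)"
    unfolding D_def K_def by (rule sum_D[OF k3 a2 b2])
  have split: "(\<Sum>e\<in>C. grid_cost k e) = (\<Sum>e\<in>C - D. grid_cost k e) + (\<Sum>e\<in>D. grid_cost k e)"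
    by (rule sum.subset_diff[OF DC finC])
  have hclb: "real a * (1 - (real k - 1) / K) \<le> (\<Sum>i=1..a. 1 - real (hc i) / K)"
  proof -
    have "(\<Sum>i=1..a. 1 - (real k - 1) / K) \<le> (\<Sum>i=1..a. 1 - real (hc i) / K)"
    proof (rule sum_mono)
      fix i assume "i \<in> {1..a}"
      then have "real (hc i) \<le> real k - 1" using hc by force
      then have "real (hc i) / K \<le> (real k - 1) / K" using Kpos by (intro divide_right_mono) auto
      then show "1 - (real k - 1) / K \<le> 1 - real (hc i) / K" by simp
    qed
    then show ?thesis by simp
  qed
  have CD: "C = D"
  proof (rule ccontr)
    assume "C \<noteq> D"
    then obtain e where e: "e \<in> C - D" using DC by blast
    have "grid_cost k e \<le> (\<Sum>e\<in>C - D. grid_cost k e)"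
      by (rule member_le_sum) (use e finC CE cnn in auto)
    moreover have "1 - (real k - 1) / K \<le> grid_cost k e"
      unfolding K_def using e CE cost_lb[OF k3] by blast
    ultimately have "1 - (real k - 1) / K + real b + real a * (1 - (real k - 1) / K) \<le> real b + real a * (1 - real b / K)"
      using split sumD hclb costC by linarith
    then show False using num1[OF k3 a2 K_def, of b] by linarith
  qed
  have Ha: "hE i j \<in> C \<Longrightarrow> i \<in> {1..a} \<and> j = hc i" for i j
    unfolding CD D_def by (auto simp: hE_inj hE_vE)
  have Vb: "vE i j \<in> C \<Longrightarrow> j \<in> {1..b} \<and> i = vc j" for i j
    unfolding CD D_def by (auto simp: vE_inj vE_hE)
  have colb1: "1 \<le> i \<Longrightarrow> i \<le> k \<Longrightarrow> U i (Suc b) \<notin> X" for i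
  proof -
    assume i: "1 \<le> i" "i \<le> k"
    have "U 1 (Suc b) \<in> X \<longleftrightarrow> U i (Suc b) \<in> X"
    proof (rule chain_const[where f = "\<lambda>i. U i (Suc b) \<in> X"])
      fix i' assume i': "1 \<le> i'" "i' < i"
      have "vE i' (Suc b) \<notin> C" using Vb by fastforce
      then show "U i' (Suc b) \<in> X \<longleftrightarrow> U (Suc i') (Suc b) \<in> X" using CV i' i b2 k3 by auto
    qed (use i in simp)
    then show ?thesis using T1[of "Suc b"] b2 k3 by simp
  qed
  have hcle: "i \<in> {1..a} \<Longrightarrow> hc i \<le> b" for i
  proof (rule ccontr)
    assume i: "i \<in> {1..a}" and nb: "\<not> hc i \<le> b"
    have "U i 1 \<in> X \<longleftrightarrow> U i (Suc b) \<in> X"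
    proof (rule chain_const[where f = "\<lambda>j. U i j \<in> X"])
      fix j' assume j': "1 \<le> j'" "j' < Suc b"
      have "hE i j' \<notin> C" using Ha j' nb by fastforce
      then show "U i j' \<in> X \<longleftrightarrow> U i (Suc j') \<in> X" using CH i j' a2 b2 k3 by auto
    qed simp
    moreover have ik: "1 \<le> i" "i \<le> k" using i a2 by auto
    ultimately show False using T2[OF ik] colb1[OF ik] i by auto
  qed
  have hcb: "i \<in> {1..a} \<Longrightarrow> hc i = b" for i
  proof -
    assume i: "i \<in> {1..a}"
    define g where "g i = real b / K - real (hc i) / K" for i
    have g0: "\<forall>i\<in>{1..a}. 0 \<le> g i"
    proof
      fix i assume "i \<in> {1..a}"
      then have "real (hc i) \<le> real b" using hcle by simp
      then have "real (hc i) / K \<le> real b / K" using Kpos by (intro divide_right_mono) auto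
      then show "0 \<le> g i" unfolding g_def by simp
    qed
    have "(\<Sum>e\<in>C. grid_cost k e) = real b + (\<Sum>i=1..a. 1 - real (hc i) / K)"
      using sumD CD by simp
    then have s1: "(\<Sum>i=1..a. 1 - real (hc i) / K) \<le> real a * (1 - real b / K)" using costC by simp
    have "(\<Sum>i=1..a. g i) = (\<Sum>i=1..a. (1 - real (hc i) / K) - (1 - real b / K))"
      unfolding g_def by (rule sum.cong) (simp_all add: algebra_simps)
    also have "\<dots> = (\<Sum>i=1..a. 1 - real (hc i) / K) - (\<Sum>i=1..a. 1 - real b / K)"
      by (rule sum_subtractf)
    also have "(\<Sum>i=1..a. 1 - real b / K) = real a * (1 - real b / K)" by simp
    finally have "(\<Sum>i=1..a. g i) = (\<Sum>i=1..a. 1 - real (hc i) / K) - real a * (1 - real b / K)" .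
    then have "(\<Sum>i=1..a. g i) \<le> 0" using s1 by simp
    moreover have "0 \<le> (\<Sum>i=1..a. g i)" using g0 by (intro sum_nonneg) auto
    ultimately have "(\<Sum>i=1..a. g i) = 0" by linarith
    then have "g i = 0" using sum_nonneg_eq_0_iff[of "{1..a}" g] g0 i by simp
    then have "real (hc i) / K = real b / K" unfolding g_def by linarith
    then have "real (hc i) = real b" using Kpos by simp
    then show ?thesis by simp
  qed
  have rowa: "1 \<le> j \<Longrightarrow> j \<le> b \<Longrightarrow> U a j \<in> X" for j
  proof -
    assume j: "1 \<le> j" "j \<le> b"
    have "U a 1 \<in> X \<longleftrightarrow> U a j \<in> X"
    proof (rule chain_const[where f = "\<lambda>j. U a j \<in> X"])
      fix j' assume j': "1 \<le> j'" "j' < j"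
      have "hE a j' \<notin> C" using Ha[of a j'] hcb[of a] a1 j' j by auto
      then show "U a j' \<in> X \<longleftrightarrow> U a (Suc j') \<in> X" using CH a1 a2 j' j b2 k3 by auto
    qed (use j in simp)
    then show ?thesis using T2[of a] a1 a2 by simp
  qed
  have rowa1: "1 \<le> j \<Longrightarrow> j \<le> k \<Longrightarrow> U (Suc a) j \<notin> X" for j
  proof -
    assume j: "1 \<le> j" "j \<le> k"
    have "U (Suc a) 1 \<in> X \<longleftrightarrow> U (Suc a) j \<in> X"
    proof (rule chain_const[where f = "\<lambda>j. U (Suc a) j \<in> X"])
      fix j' assume j': "1 \<le> j'" "j' < j"
      have "hE (Suc a) j' \<notin> C" using Ha[of "Suc a" j'] by auto
      then show "U (Suc a) j' \<in> X \<longleftrightarrow> U (Suc a) (Suc j') \<in> X" using CH a1 a2 j' j k3 by auto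
    qed (use j in simp)
    then show ?thesis using T2[of "Suc a"] a1 a2 by simp
  qed
  have inC: "1 \<le> j \<Longrightarrow> j \<le> b \<Longrightarrow> vE a j \<in> C" for j
    using CV rowa rowa1 a1 a2 b2 by auto
  have "vE i j \<in> C \<longleftrightarrow> (i = a \<and> j \<le> b)"
  proof
    assume "vE i j \<in> C"
    then have "j \<in> {1..b}" "i = vc j" using Vb by auto
    moreover have "vc j = a" using Vb[OF inC[of j]] calculation by auto
    ultimately show "i = a \<and> j \<le> b" by auto
  qed (use inC j1 in auto)
  then show ?thesis using cutX unfolding C_def by simp
qed

theorem lemma3p8:
  fixes k :: nat and Ss W :: "nat \<Rightarrow> vert set" and es :: "vert set list"
  assumes "k \<ge> 3"
    and "bipartition_enum k Ss"
    and "distinct es" and "set es = grid_edges k"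
    and "\<forall>t < nparts k. min_sep_cut k (Ss t) (W t)"
  shows "vec_space.rank (nparts k) (incidence_mat k W es) \<ge> (k - 1) ^ 2"
proof -
  define P where "P = {1..k-1} \<times> {1..k-1}"
  have k3: "3 \<le> k" using assms(1) by simp
  have finE: "finite (grid_edges k)" using assms(4) by (metis List.finite_set)
  have ex: "\<forall>p\<in>P. \<exists>t. t < nparts k \<and> min_sep_cut k (Sab (fst p) (snd p)) (W t)"
  proof
    fix p assume p: "p \<in> P"
    obtain a b where ab: "p = (a,b)" by force
    have a: "1 \<le> a" "a \<le> k - 1" and b: "1 \<le> b" "b \<le> k - 1" using p ab unfolding P_def by auto
    have SQ: "Sab a b \<subseteq> terminals k" unfolding Sab_def terminals_def using a b by auto
    have ne: "Sab a b \<noteq> {}" using a unfolding Sab_def by blast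
    have "V k \<notin> Sab a b" using b k3 unfolding Sab_def by auto
    moreover have "V k \<in> terminals k" using k3 Q_V by simp
    ultimately have nQ: "Sab a b \<noteq> terminals k" by blast
    obtain t where t: "t < nparts k" "Ss t = Sab a b \<or> Ss t = terminals k - Sab a b"
      using assms(2) SQ ne nQ unfolding bipartition_enum_def by blast
    have "min_sep_cut k (Ss t) (W t)" using assms(5) t by auto
    then have "min_sep_cut k (Sab a b) (W t)" using t(2) min_sep_compl[OF SQ] by auto
    then show "\<exists>t. t < nparts k \<and> min_sep_cut k (Sab (fst p) (snd p)) (W t)" using t ab by auto
  qed
  obtain \<rho> where \<rho>: "\<forall>p\<in>P. \<rho> p < nparts k \<and> min_sep_cut k (Sab (fst p) (snd p)) (W (\<rho> p))"
    using bchoice[OF ex] by blast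
  have KEY: "p \<in> P \<Longrightarrow> 1 \<le> i \<Longrightarrow> i \<le> k - 1 \<Longrightarrow> 1 \<le> j \<Longrightarrow> j \<le> k - 1 \<Longrightarrow>
      vE i j \<in> cutset k (W (\<rho> p)) \<longleftrightarrow> (i = fst p \<and> j \<le> snd p)" for p i j
  proof -
    assume p: "p \<in> P" and ij: "1 \<le> i" "i \<le> k - 1" "1 \<le> j" "j \<le> k - 1"
    have a: "1 \<le> fst p" "fst p \<le> k - 1" and b: "1 \<le> snd p" "snd p \<le> k - 1" using p unfolding P_def by auto
    show ?thesis by (rule key[OF k3 a b finE _ ij]) (use \<rho> p in blast)
  qed
  have gex: "\<forall>p\<in>P. \<exists>n. n < length es \<and> es ! n = vE (fst p) (snd p)"
  proof
    fix p assume p: "p \<in> P"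
    then have "vE (fst p) (snd p) \<in> set es" unfolding assms(4) vE_in P_def using k3 by auto
    then show "\<exists>n. n < length es \<and> es ! n = vE (fst p) (snd p)" by (simp add: in_set_conv_nth)
  qed
  obtain \<gamma> where \<gamma>: "\<forall>p\<in>P. \<gamma> p < length es \<and> es ! \<gamma> p = vE (fst p) (snd p)"
    using bchoice[OF gex] by blast
  have inj\<gamma>: "inj_on \<gamma> P"
  proof (rule inj_onI)
    fix p q assume "p \<in> P" "q \<in> P" "\<gamma> p = \<gamma> q"
    then have "vE (fst p) (snd p) = vE (fst q) (snd q)" using \<gamma> by metis
    then show "p = q" by (simp add: vE_inj prod_eq_iff)
  qed
  have inj\<rho>: "inj_on \<rho> P"
  proof (rule inj_onI)
    fix p q assume p: "p \<in> P" and q: "q \<in> P" and e: "\<rho> p = \<rho> q"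
    have a: "1 \<le> fst p" "fst p \<le> k - 1" "1 \<le> snd p" "snd p \<le> k - 1"
      and a': "1 \<le> fst q" "fst q \<le> k - 1" "1 \<le> snd q" "snd q \<le> k - 1" using p q unfolding P_def by auto
    have "vE (fst p) 1 \<in> cutset k (W (\<rho> p))" using KEY[OF p] a by simp
    then have f: "fst p = fst q" using KEY[OF q, of "fst p" 1] a e by simp
    have "vE (fst p) (snd p) \<in> cutset k (W (\<rho> p))" using KEY[OF p] a by simp
    then have s1: "snd p \<le> snd q" using KEY[OF q, of "fst p" "snd p"] a e by simp
    have "vE (fst q) (snd q) \<in> cutset k (W (\<rho> q))" using KEY[OF q] a' by simp
    then have s2: "snd q \<le> snd p" using KEY[OF p, of "fst q" "snd q"] a' e by simp
    show "p = q" using f s1 s2 by (simp add: prod_eq_iff)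
  qed
  define A where "A = incidence_mat k W es"
  have Ac: "A \<in> carrier_mat (nparts k) (length es)" unfolding A_def incidence_mat_def by simp
  have Aent: "p \<in> P \<Longrightarrow> q \<in> P \<Longrightarrow> A $$ (\<rho> p, \<gamma> q) = (if fst q = fst p \<and> snd q \<le> snd p then 1 else 0)" for p q
  proof -
    assume p: "p \<in> P" and q: "q \<in> P"
    have "A $$ (\<rho> p, \<gamma> q) = (if es ! \<gamma> q \<in> cutset k (W (\<rho> p)) then 1 else 0)"
      unfolding A_def incidence_mat_def using \<rho> \<gamma> p q by simp
    also have "es ! \<gamma> q = vE (fst q) (snd q)" using \<gamma> q by simp
    also have "vE (fst q) (snd q) \<in> cutset k (W (\<rho> p)) \<longleftrightarrow> (fst q = fst p \<and> snd q \<le> snd p)"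
      using KEY[OF p, of "fst q" "snd q"] q unfolding P_def by auto
    finally show ?thesis .
  qed
  have inv: "\<forall>q\<in>P. x q = 0" if h: "\<forall>p\<in>P. (\<Sum>q\<in>P. A $$ (\<rho> p, \<gamma> q) * x q) = 0" for x :: "nat \<times> nat \<Rightarrow> real"
  proof -
    have hs: "(\<Sum>b'=1..b. x (a, b')) = 0" if ab: "(a,b) \<in> P" for a b
    proof -
      have ab': "1 \<le> a" "a \<le> k - 1" "1 \<le> b" "b \<le> k - 1" using ab unfolding P_def by auto
      have "0 = (\<Sum>q\<in>P. A $$ (\<rho> (a,b), \<gamma> q) * x q)" using h ab by simp
      also have "\<dots> = (\<Sum>q\<in>P. if fst q = a \<and> snd q \<le> b then x q else 0)"
        by (rule sum.cong) (use Aent[OF ab] in auto)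
      also have "\<dots> = (\<Sum>q\<in>{q\<in>P. fst q = a \<and> snd q \<le> b}. x q)"
        by (rule sum.inter_filter[symmetric]) (simp add: P_def)
      also have "{q\<in>P. fst q = a \<and> snd q \<le> b} = Pair a ` {1..b}"
        using ab' unfolding P_def by auto
      also have "(\<Sum>q\<in>Pair a ` {1..b}. x q) = (\<Sum>b'=1..b. x (a, b'))"
        by (rule sum.reindex_cong[where l = "Pair a"]) (auto simp: inj_on_def)
      finally show ?thesis by simp
    qed
    show ?thesis
    proof
      fix q assume q: "q \<in> P"
      obtain a b where qab: "q = (a,b)" by force
      have a: "1 \<le> a" "a \<le> k - 1" and b: "b \<le> k - 1" "1 \<le> b" using q qab unfolding P_def by auto
      have "b \<le> k - 1 \<Longrightarrow> \<forall>b'\<in>{1..b}. x (a, b') = 0" for b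
      proof (induction b)
        case 0 then show ?case by simp
      next
        case (Suc b)
        then have IH: "\<forall>b'\<in>{1..b}. x (a, b') = 0" by simp
        have "(a, Suc b) \<in> P" using Suc.prems a unfolding P_def by auto
        then have "(\<Sum>b'=1..Suc b. x (a, b')) = 0" by (rule hs)
        moreover have "(\<Sum>b'=1..b. x (a, b')) = 0" using IH by simp
        ultimately have "x (a, Suc b) = 0" by (simp add: sum.cl_ivl_Suc)
        then show ?case using IH by (auto simp: le_Suc_eq)
      qed
      then show "x q = 0" using b qab by auto
    qed
  qed
  have finP: "finite P" unfolding P_def by simp
  have r1: "\<rho> ` P \<subseteq> {..<nparts k}" using \<rho> by auto
  have g1: "\<gamma> ` P \<subseteq> {..<length es}" using \<gamma> by auto
  have "card P \<le> vec_space.rank (nparts k) A"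
    by (rule rank_ge_inj[OF Ac finP inj\<rho> r1 inj\<gamma> g1 inv])
  moreover have "card P = (k - 1) ^ 2" unfolding P_def by (simp only: card_cartesian_product card_atLeastAtMost power2_eq_square) simp
  ultimately show ?thesis unfolding A_def by simp
qed

end
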